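(* For integers $m,k\ge 1$ and complex $\alpha$ with $\operatorname{Re}(\alpha)>0$, the integrals $I(\alpha,m,k)$ satisfy the recurrence $$I(\alpha,m,k)=\sum_{i=0}^{m-1}\binom{m-1}{i}(m-i-1)!\,\frac{(-1)^{m-i}}{\alpha^{m-i}}\,I(\alpha,i,k) +\sum_{i=0}^{m-1}\sum_{j=0}^{k-1}\binom{m-1}{i}\binom{k}{j}(-1)^{m+k-i-j}(m+k-i-j-1)!\,\Big(H_\alpha^{(m+k-i-j)}-\zeta(m+k-i-j)\Big)\,I(\alpha,i,j),$$ where $I(\alpha,0,0)=\frac1\alpha$ and $I(\alpha,i,0)=(-1)^i\,i!\,\alpha^{-i-1}$ for $i\ge 0$.
   Context: For integers $m,k\ge0$ and $\operatorname{Re}(\alpha)>0$, $I(\alpha,m,k):=\int_0^1 x^{\alpha-1}\ln^m x\,\ln^k(1-x)\,dx$. Shifted harmonic numbers: for a complex number $\alpha$ that is not a negative integer and an integer $s\ge 2$, $H_\alpha^{(s)} := \sum_{n=1}^\infty\left(\frac1{n^s}-\frac1{(n+\alpha)^s}\right)=\zeta(s)-\zeta(s,\alpha+1)$, where $\zeta$ is the Riemann zeta function and $\zeta(s,\alpha+1)=\sum_{n=1}^\infty (n+\alpha)^{-s}$ is the Hurwitz zeta function. *)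

theory Defs
  imports "HOL-Analysis.Analysis"
begin

definition Iint :: "complex \<Rightarrow> nat \<Rightarrow> nat \<Rightarrow> complex" where
  "Iint \<alpha> m k = integral {0..1}
     (\<lambda>x::real. complex_of_real x powr (\<alpha> - 1) * complex_of_real ((ln x) ^ m * (ln (1 - x)) ^ k))"

definition zeta_int :: "nat \<Rightarrow> complex" where
  "zeta_int s = (\<Sum>n. 1 / (of_nat (Suc n)) ^ s)"

definition shifted_harmonic :: "complex \<Rightarrow> nat \<Rightarrow> complex" where
  "shifted_harmonic \<alpha> s = (\<Sum>n. 1 / (of_nat (Suc n)) ^ s - 1 / (of_nat (Suc n) + \<alpha>) ^ s)"

end

theory Submission
  imports Defs "HOL-Complex_Analysis.Complex_Analysis"
begin


definition Phi :: "real \<Rightarrow> real \<Rightarrow> nat \<Rightarrow> nat \<Rightarrow> real \<Rightarrow> real" where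
 "Phi s t p q x = x powr (s - 1) * (1 - x) powr (t - 1) * \<bar>ln x\<bar> ^ p * \<bar>ln (1 - x)\<bar> ^ q"

lemma ln_bound: fixes x d :: real assumes "0 < x" "x < 1" "0 < d" shows "\<bar>ln x\<bar> \<le> x powr (-d) / d"
proof -
  have "ln (1/x) \<le> (1/x) powr d / d" using ln_powr_bound[of "1/x" d] assms by simp
  moreover have "ln (1/x) = \<bar>ln x\<bar>" using assms by (simp add: ln_div)
  moreover have "(1/x) powr d = x powr (-d)" using assms by (simp add: powr_minus_divide powr_divide)
  ultimately show ?thesis by simp
qed

lemma ln_pow_bound: fixes x d :: real assumes "0 < x" "x < 1" "0 < d"
  shows "\<bar>ln x\<bar> ^ p \<le> (1/d) ^ p * x powr (- (d * p))"
proof -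
  have "\<bar>ln x\<bar> ^ p \<le> (x powr (-d) / d) ^ p"
    by (intro power_mono ln_bound assms) simp
  also have "\<dots> = (1/d)^p * (x powr (-d))^p" by (simp add: power_divide field_simps)
  also have "(x powr (-d))^p = x powr (- (d * p))" using assms by (simp add: powr_power mult_ac)
  finally show ?thesis .
qed


lemma beta_int: fixes s t :: real assumes "0<s" "0<t"
  shows "(\<lambda>x. x powr (s-1) * (1-x) powr (t-1)) integrable_on {0<..<1}"
  using has_integral_Beta_real[OF assms] integrable_on_Icc_iff_Ioo has_integral_integrable by blast

lemma Phi_cont: "continuous_on {0<..<1} (Phi s t p q)"
  unfolding Phi_def by (intro continuous_intros) auto

lemma Phi_integrable: fixes s t::real assumes "0<s" "0<t" shows "Phi s t p q integrable_on {0<..<1}"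
proof -
  define d where "d = s / (2 * (p+1))"
  define e where "e = t / (2*(q+1))"
  define s' where "s' = s - d*p"
  define t' where "t' = t - e*q"
  have d: "d > 0" "e > 0" using assms by (auto simp: d_def e_def)
  have "d * p \<le> s/2" using assms by (simp add: d_def field_simps)
  hence s': "s' > 0" using assms by (simp add: s'_def)
  have "e * q \<le> t/2" using assms by (simp add: e_def field_simps)
  hence t': "t' > 0" using assms by (simp add: t'_def)
  define C where "C = (1/d)^p * (1/e)^q"
  show ?thesis
  proof (rule measurable_bounded_by_integrable_imp_integrable)
    show "Phi s t p q \<in> borel_measurable (lebesgue_on {0<..<1})"
      by (rule continuous_imp_measurable_on_sets_lebesgue[OF Phi_cont]) auto
    show "(\<lambda>x. C * (x powr (s'-1) * (1-x) powr (t'-1))) integrable_on {0<..<1}"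
      using beta_int[OF s' t'] by (rule integrable_on_mult_right)
    show "{0<..<(1::real)} \<in> sets lebesgue" by simp
    fix x :: real assume x: "x \<in> {0<..<1}"
    have l1: "\<bar>ln x\<bar> ^ p \<le> (1/d) ^ p * x powr (- (d * p))"
      using x d by (intro ln_pow_bound) auto
    have l2: "\<bar>ln (1-x)\<bar> ^ q \<le> (1/e) ^ q * (1-x) powr (- (e * q))"
      using x d by (intro ln_pow_bound) auto
    have "norm (Phi s t p q x) = x powr (s - 1) * (1 - x) powr (t - 1) * (\<bar>ln x\<bar> ^ p * \<bar>ln (1 - x)\<bar> ^ q)"
      by (simp add: Phi_def mult_ac)
    also have "\<dots> \<le> x powr (s - 1) * (1 - x) powr (t - 1) * (((1/d) ^ p * x powr (- (d * p))) * ((1/e) ^ q * (1-x) powr (- (e * q))))"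
      using x l1 l2 d by (intro mult_left_mono mult_mono) auto
    also have "\<dots> = C * ((x powr (s - 1) * x powr (- (d * p))) * ((1 - x) powr (t - 1) * (1-x) powr (- (e * q))))"
      by (simp add: C_def mult_ac)
    also have "\<dots> = C * (x powr (s'-1) * (1-x) powr (t'-1))"
      by (simp add: powr_add[symmetric] s'_def t'_def algebra_simps)
    finally show "norm (Phi s t p q x) \<le> C * (x powr (s'-1) * (1-x) powr (t'-1))" .
  qed
qed

definition fI :: "complex \<Rightarrow> complex \<Rightarrow> nat \<Rightarrow> nat \<Rightarrow> real \<Rightarrow> complex" where
 "fI a b m k x = exp ((a - 1) * of_real (ln x)) * exp ((b - 1) * of_real (ln (1 - x))) * of_real (ln x ^ m * ln (1 - x) ^ k)"

definition TI :: "complex \<Rightarrow> complex \<Rightarrow> nat \<Rightarrow> nat \<Rightarrow> complex" where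
  "TI a b m k = integral {0<..<1} (fI a b m k)"

lemma norm_fI: assumes "x \<in> {0<..<1}" shows "norm (fI a b m k x) = Phi (Re a) (Re b) m k x"
  using assms by (simp add: fI_def Phi_def norm_mult norm_power powr_def mult_ac)

lemma fI_cont: "continuous_on {0<..<1} (fI a b m k)"
  unfolding fI_def by (intro continuous_intros) auto

lemma fI_integrable: assumes "Re a > 0" "Re b > 0" shows "fI a b m k integrable_on {0<..<1}"
proof (rule measurable_bounded_by_integrable_imp_integrable)
  show "fI a b m k \<in> borel_measurable (lebesgue_on {0<..<1})"
    by (rule continuous_imp_measurable_on_sets_lebesgue[OF fI_cont]) auto
  show "Phi (Re a) (Re b) m k integrable_on {0<..<1}" using Phi_integrable assms by blast
qed (auto simp: norm_fI)




lemma exp_bound2: fixes w :: complex shows "norm (exp w - 1 - w) \<le> norm w ^ 2 * exp (norm w)"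
proof -
  have sums: "(\<lambda>k. w^(k+2) /\<^sub>R fact (k+2)) sums (exp w - (\<Sum>k<2. w^k /\<^sub>R fact k))"
    by (intro sums_split_initial_segment exp_converges)
  have s2: "summable (\<lambda>k. norm (w^(k+2) /\<^sub>R fact (k+2)))"
    using summable_norm_exp[of w] by (rule summable_ignore_initial_segment)
  have s3: "summable (\<lambda>k. norm w ^ 2 * (norm w^k /\<^sub>R fact k))"
    by (intro summable_mult summable_exp_generic)
  have "exp w - 1 - w = (\<Sum>k. w^(k+2) /\<^sub>R fact (k+2))"
    using sums by (simp add: sums_iff eval_nat_numeral)
  also have "norm \<dots> \<le> (\<Sum>k. norm (w^(k+2) /\<^sub>R fact (k+2)))" by (rule summable_norm[OF s2])
  also have "\<dots> \<le> (\<Sum>k. norm w ^ 2 * (norm w^k /\<^sub>R fact k))"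
  proof (rule suminf_le[OF _ s2 s3])
    fix k
    have "fact k \<le> (fact (k+2) :: real)" by (intro fact_mono) auto
    hence "norm w ^ (k+2) / fact (k+2) \<le> norm w ^ (k+2) / fact k"
      by (intro divide_left_mono) auto
    have "norm (w^(k+2) /\<^sub>R fact (k+2)) = norm w ^ (k+2) / fact (k+2)" by (simp add: norm_power norm_mult divide_inverse mult_ac)
    also note \<open>norm w ^ (k+2) / fact (k+2) \<le> norm w ^ (k+2) / fact k\<close>
    also have "norm w ^ (k+2) / fact k = norm w ^ 2 * (norm w^k /\<^sub>R fact k)"
      by (simp add: power_add mult_ac divide_inverse power2_eq_square)
    finally show "norm (w^(k+2) /\<^sub>R fact (k+2)) \<le> norm w ^ 2 * (norm w^k /\<^sub>R fact k)" .
  qed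
  also have "\<dots> = norm w ^ 2 * exp (norm w)"
    using suminf_mult[OF summable_exp_generic[of "norm w"], of "norm w ^ 2"] by (simp add: exp_def)
  finally show ?thesis .
qed

lemma fI_Suc: "fI a b m k x * of_real (ln x) = fI a b (Suc m) k x"
  by (simp add: fI_def mult_ac)

lemma fI_shift: "fI z b m k x = fI a b m k x * exp ((z - a) * of_real (ln x))"
proof -
  have "(z - 1) * of_real (ln x) = (a - 1) * of_real (ln x) + (z - a) * of_real (ln x)"
    by (simp add: algebra_simps)
  thus ?thesis by (simp add: fI_def exp_add mult_ac)
qed

lemma TI_has_integral: assumes "Re a > 0" "Re b > 0"
  shows "(fI a b m k has_integral TI a b m k) {0<..<1}"
  unfolding TI_def using fI_integrable[OF assms] by (rule integrable_integral)

lemma TI_deriv1: assumes a: "Re a > 0" and b: "Re b > 0"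
  shows "((\<lambda>z. TI z b m k) has_field_derivative TI a b (Suc m) k) (at a)"
proof -
  define d where "d = Re a / 2"
  have d: "d > 0" using a by (simp add: d_def)
  define G where "G = Phi (Re a - d) (Re b) (m+2) k"
  have Gint: "G integrable_on {0<..<1}" unfolding G_def using a b
    by (intro Phi_integrable) (auto simp: d_def)
  define C where "C = integral {0<..<1} G"
  have key: "norm (TI z b m k - TI a b m k - (z - a) * TI a b (Suc m) k) \<le> norm (z - a) ^ 2 * C"
    if z: "norm (z - a) < d" for z
  proof -
    let ?h = "z - a"
    have "\<bar>Re z - Re a\<bar> \<le> norm (z - a)" using abs_Re_le_cmod[of "z - a"] by simp
    hence rz: "Re z > 0" using z by (simp add: d_def)
    have hi: "((\<lambda>x. fI z b m k x - fI a b m k x - ?h * fI a b (Suc m) k x) has_integral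
             (TI z b m k - TI a b m k - ?h * TI a b (Suc m) k)) {0<..<1}"
      by (intro has_integral_diff has_integral_mult_right TI_has_integral rz a b)
    have "norm (TI z b m k - TI a b m k - ?h * TI a b (Suc m) k)
         \<le> integral {0<..<1} (\<lambda>x. norm ?h ^ 2 * G x)"
    proof -
      have "norm (integral {0<..<1} (\<lambda>x. fI z b m k x - fI a b m k x - ?h * fI a b (Suc m) k x))
         \<le> integral {0<..<1} (\<lambda>x. norm ?h ^ 2 * G x)"
      proof (rule integral_norm_bound_integral)
        show "(\<lambda>x. fI z b m k x - fI a b m k x - ?h * fI a b (Suc m) k x) integrable_on {0<..<1}"
          using hi by blast
        show "(\<lambda>x. norm ?h ^ 2 * G x) integrable_on {0<..<1}"
          using Gint by (rule integrable_on_mult_right)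
        fix x :: real assume x: "x \<in> {0<..<1}"
        define L where "L = ln x"
        have L: "L < 0" using x by (simp add: L_def)
        have eq: "fI z b m k x - fI a b m k x - ?h * fI a b (Suc m) k x
             = fI a b m k x * (exp (?h * of_real L) - 1 - ?h * of_real L)"
          by (simp add: fI_shift[of z b m k x a] fI_Suc[symmetric] L_def algebra_simps)
        have n1: "norm (exp (?h * of_real L) - 1 - ?h * of_real L) \<le> norm ?h ^ 2 * L^2 * exp (d * \<bar>L\<bar>)"
        proof -
          have "norm (exp (?h * of_real L) - 1 - ?h * of_real L) \<le> norm (?h * of_real L) ^ 2 * exp (norm (?h * of_real L))"
            by (rule exp_bound2)
          also have "\<dots> \<le> norm ?h ^ 2 * L^2 * exp (d * \<bar>L\<bar>)"
            using z by (auto simp: norm_mult power_mult_distrib intro!: mult_left_mono mult_right_mono)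
          finally show ?thesis .
        qed
        have e: "x powr (Re a - 1) * exp (d * \<bar>L\<bar>) = x powr (Re a - d - 1)"
          using x L by (simp add: L_def powr_def exp_add[symmetric] algebra_simps)
        have "norm (fI z b m k x - fI a b m k x - ?h * fI a b (Suc m) k x)
             = Phi (Re a) (Re b) m k x * norm (exp (?h * of_real L) - 1 - ?h * of_real L)"
          using x by (simp add: eq norm_mult norm_fI)
        also have "\<dots> \<le> Phi (Re a) (Re b) m k x * (norm ?h ^ 2 * L^2 * exp (d * \<bar>L\<bar>))"
          using x n1 by (intro mult_left_mono) (auto simp: Phi_def)
        also have "\<dots> = norm ?h ^ 2 * ((x powr (Re a - 1) * exp (d * \<bar>L\<bar>)) * (1 - x) powr (Re b - 1) * \<bar>ln x\<bar> ^ (m+2) * \<bar>ln (1 - x)\<bar> ^ k)"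
          by (simp add: Phi_def L_def power_add power2_eq_square mult_ac)
        also have "\<dots> = norm ?h ^ 2 * G x"
          by (simp add: e G_def Phi_def)
        finally show "norm (fI z b m k x - fI a b m k x - ?h * fI a b (Suc m) k x) \<le> norm ?h ^ 2 * G x" .
      qed
      thus ?thesis using hi by (simp add: integral_unique)
    qed
    also have "\<dots> = norm ?h ^ 2 * C" by (simp add: C_def)
    finally show ?thesis .
  qed
  have "((\<lambda>z. (TI z b m k - TI a b m k) / (z - a) - TI a b (Suc m) k) \<longlongrightarrow> 0) (at a)"
  proof (rule Lim_null_comparison)
    show "eventually (\<lambda>z. norm ((TI z b m k - TI a b m k) / (z - a) - TI a b (Suc m) k) \<le> norm (z - a) * C) (at a)"
      unfolding eventually_at
    proof (intro exI[of _ d] conjI ballI impI allI d)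
      fix z assume "z \<in> UNIV" "z \<noteq> a \<and> dist z a < d"
      hence za: "z \<noteq> a" "norm (z - a) < d" by (auto simp: dist_norm)
      have "(TI z b m k - TI a b m k) / (z - a) - TI a b (Suc m) k
           = (TI z b m k - TI a b m k - (z - a) * TI a b (Suc m) k) / (z - a)"
        using za by (simp add: field_simps)
      hence "norm ((TI z b m k - TI a b m k) / (z - a) - TI a b (Suc m) k)
           = norm (TI z b m k - TI a b m k - (z - a) * TI a b (Suc m) k) / norm (z - a)"
        by (simp add: norm_divide)
      also have "\<dots> \<le> norm (z - a) ^ 2 * C / norm (z - a)"
        using key[OF za(2)] za by (intro divide_right_mono) auto
      also have "\<dots> = norm (z - a) * C" using za by (simp add: power2_eq_square)
      finally show "norm ((TI z b m k - TI a b m k) / (z - a) - TI a b (Suc m) k) \<le> norm (z - a) * C" .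
    qed
    show "((\<lambda>z. norm (z - a) * C) \<longlongrightarrow> 0) (at a)"
      by (intro tendsto_eq_intros) auto
  qed
  thus ?thesis unfolding has_field_derivative_iff by (rule LIM_zero_cancel)
qed




lemma integral_flip: "integral {0..1} (\<lambda>x. g (1 - x)) = integral {0..1::real} (g :: real \<Rightarrow> complex)"
proof -
  have "integral {0..1} ((\<lambda>x. g (-x)) \<circ> (+) (-1)) = integral {0 + -1..1 + -1} (\<lambda>x. g(-x))"
    by (rule integral_shift_Icc_real)
  also have "\<dots> = integral {-1..-0} (\<lambda>x. g(-x))" by simp
  also have "\<dots> = integral {0..1} g" using Henstock_Kurzweil_Integration.integral_reflect_real[of 1 0 g] by simp
  finally show ?thesis by (simp add: o_def)
qed

lemma fI_flip: "fI a b m k (1 - x) = fI b a k m x"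
  by (simp add: fI_def mult_ac)

lemma TI_sym: "TI a b m k = TI b a k m"
proof -
  have "TI a b m k = integral {0..1} (fI a b m k)" by (simp add: TI_def integral_open_interval_real)
  also have "\<dots> = integral {0..1} (\<lambda>x. fI a b m k (1 - x))" by (rule integral_flip[symmetric])
  also have "\<dots> = TI b a k m" by (simp add: fI_flip TI_def integral_open_interval_real)
  finally show ?thesis .
qed

lemma TI_deriv2: assumes a: "Re a > 0" and b: "Re b > 0"
  shows "((\<lambda>w. TI a w m k) has_field_derivative TI a b m (Suc k)) (at b)"
proof -
  have "((\<lambda>w. TI w a k m) has_field_derivative TI b a (Suc k) m) (at b)"
    by (rule TI_deriv1[OF b a])
  moreover have "(\<lambda>w. TI a w m k) = (\<lambda>w. TI w a k m)" by (rule ext, rule TI_sym)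
  moreover have "TI b a (Suc k) m = TI a b m (Suc k)" by (rule TI_sym)
  ultimately show ?thesis by simp
qed

definition HP :: "complex set" where "HP = {z. Re z > 0}"

lemma HP_open: "open HP" unfolding HP_def by (rule open_halfspace_Re_gt)
lemma HP_connected: "connected HP" unfolding HP_def by (rule convex_connected[OF convex_halfspace_Re_gt])
lemma HP_nonpos: "z \<in> HP \<Longrightarrow> z \<notin> \<int>\<^sub>\<le>\<^sub>0"
  unfolding HP_def by (auto elim!: nonpos_Ints_cases)

lemma Re_pos_nonpos: "0 < Re z \<Longrightarrow> z \<notin> \<int>\<^sub>\<le>\<^sub>0"
  by (auto elim!: nonpos_Ints_cases)

lemma TI_real: assumes "s > 0" "t > 0"
  shows "TI (of_real s) (of_real t) 0 0 = Beta (of_real s) (of_real t)"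
proof -
  have "((\<lambda>x. x powr (s - 1) * (1 - x) powr (t - 1)) has_integral Beta s t) {0<..<1}"
    using has_integral_Beta_real[OF assms] by (simp add: has_integral_Icc_iff_Ioo)
  hence "((\<lambda>x. complex_of_real (x powr (s - 1) * (1 - x) powr (t - 1))) has_integral of_real (Beta s t)) {0<..<1}"
    by (rule has_integral_of_real)
  hence "(fI (of_real s) (of_real t) 0 0 has_integral of_real (Beta s t)) {0<..<1}"
    by (rule has_integral_eq[rotated]) (auto simp: fI_def powr_def exp_of_real[symmetric] mult_ac)
  thus ?thesis by (simp add: TI_def integral_unique Beta_complex_of_real)
qed

lemma one_limpt: "(1::complex) islimpt (of_real ` {0<..})"
  unfolding islimpt_approachable
proof (intro allI impI)
  fix e :: real assume e: "e > 0"
  have "1 + e/2 \<in> {(0::real)<..}" using e by simp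
  hence m: "complex_of_real (1 + e/2) \<in> of_real ` {0<..}" by (rule imageI)
  have "dist (complex_of_real (1 + e/2)) 1 = e/2" using e by (simp add: dist_norm)
  hence "complex_of_real (1 + e / 2) \<noteq> 1 \<and> dist (complex_of_real (1 + e / 2)) 1 < e"
    using e by (auto simp del: of_real_add)
  with m show "\<exists>x'\<in>(of_real ` {0<..} :: complex set). x' \<noteq> 1 \<and> dist x' 1 < e" by blast
qed

lemma real_sub_HP: "of_real ` {0<..} \<subseteq> HP" by (auto simp: HP_def)

lemma TI_Beta: assumes a: "Re a > 0" and b: "Re b > 0" shows "TI a b 0 0 = Beta a b"
proof -
  have step1: "TI z (of_real t) 0 0 = Beta z (of_real t)" if z: "Re z > 0" and t: "t > 0" for z t
  proof -
    have "TI z (of_real t) 0 0 - Beta z (of_real t) = 0"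
    proof (rule analytic_continuation[of "\<lambda>z. TI z (of_real t) 0 0 - Beta z (of_real t)" HP "of_real ` {0<..}" 1])
      show "(\<lambda>z. TI z (of_real t) 0 0 - Beta z (of_real t)) holomorphic_on HP"
      proof (intro holomorphic_on_diff)
        show "(\<lambda>z. TI z (of_real t) 0 0) holomorphic_on HP"
        proof (subst holomorphic_on_open[OF HP_open], intro ballI exI)
          fix z assume "z \<in> HP"
          thus "((\<lambda>z. TI z (of_real t) 0 0) has_field_derivative TI z (of_real t) (Suc 0) 0) (at z)"
            using TI_deriv1[of z "of_real t" 0 0] t by (simp add: HP_def)
        qed
        show "(\<lambda>z. Beta z (of_real t)) holomorphic_on HP"
          by (intro holomorphic_intros) (use t in \<open>auto simp: HP_def intro!: Re_pos_nonpos\<close>)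
      qed
      show "\<And>w. w \<in> of_real ` {0<..} \<Longrightarrow> TI w (of_real t) 0 0 - Beta w (of_real t) = 0"
        using TI_real t by auto
    qed (use HP_open HP_connected one_limpt real_sub_HP z in \<open>auto simp: HP_def\<close>)
    thus ?thesis by simp
  qed
  have "TI a b 0 0 - Beta a b = 0"
  proof (rule analytic_continuation[of "\<lambda>w. TI a w 0 0 - Beta a w" HP "of_real ` {0<..}" 1])
    show "(\<lambda>w. TI a w 0 0 - Beta a w) holomorphic_on HP"
    proof (intro holomorphic_on_diff)
      show "(\<lambda>w. TI a w 0 0) holomorphic_on HP"
      proof (subst holomorphic_on_open[OF HP_open], intro ballI exI)
        fix z assume "z \<in> HP"
        thus "((\<lambda>w. TI a w 0 0) has_field_derivative TI a z 0 (Suc 0)) (at z)"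
          using TI_deriv2[of a z 0 0] a by (simp add: HP_def)
      qed
      show "(\<lambda>w. Beta a w) holomorphic_on HP"
        by (intro holomorphic_intros) (use a in \<open>auto simp: HP_def intro!: Re_pos_nonpos\<close>)
    qed
    show "\<And>w. w \<in> of_real ` {0<..} \<Longrightarrow> TI a w 0 0 - Beta a w = 0"
      using step1 a by auto
  qed (use HP_open HP_connected one_limpt real_sub_HP b in \<open>auto simp: HP_def\<close>)
  thus ?thesis by simp
qed

lemma TI_key: assumes a: "Re a > 0" and b: "Re b > 0"
  shows "TI a b 1 0 = TI a b 0 0 * (Digamma a - Digamma (a + b))"
proof -
  have "((\<lambda>z. Beta z b) has_field_derivative TI a b (Suc 0) 0) (at a)"
  proof (rule has_field_derivative_transform_within_open[OF TI_deriv1[OF a b, of 0 0] HP_open])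
    show "a \<in> HP" using a by (simp add: HP_def)
    show "\<And>z. z \<in> HP \<Longrightarrow> TI z b 0 0 = Beta z b" using TI_Beta b by (auto simp: HP_def)
  qed
  moreover have "((\<lambda>z. Beta z b) has_field_derivative Beta a b * (Digamma a - Digamma (a + b))) (at a)"
    by (rule has_field_derivative_Beta1) (use a b in \<open>auto intro!: Re_pos_nonpos\<close>)
  ultimately show ?thesis using DERIV_unique TI_Beta[OF a b] by (metis One_nat_def)
qed




definition dchain :: "complex set \<Rightarrow> (nat \<Rightarrow> complex \<Rightarrow> complex) \<Rightarrow> bool" where
  "dchain S F \<longleftrightarrow> (\<forall>n. \<forall>z\<in>S. (F n has_field_derivative F (Suc n) z) (at z))"

lemma dchain_unique:
  assumes S: "open S" and F: "dchain S F" and G: "dchain S G" and base: "\<And>z. z \<in> S \<Longrightarrow> F 0 z = G 0 z"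
  shows "z \<in> S \<Longrightarrow> F n z = G n z"
proof (induction n arbitrary: z)
  case 0 thus ?case using base by simp
next
  case (Suc n z)
  have "(G n has_field_derivative F (Suc n) z) (at z)"
    by (rule has_field_derivative_transform_within_open[of "F n" _ z S])
       (use F Suc in \<open>auto simp: dchain_def S\<close>)
  moreover have "(G n has_field_derivative G (Suc n) z) (at z)" using G Suc by (auto simp: dchain_def)
  ultimately show ?case by (rule DERIV_unique)
qed

lemma leibniz_sum:
  fixes F G :: "nat \<Rightarrow> complex"
  shows "(\<Sum>i = 0..n. of_nat (n choose i) * (F (Suc i) * G (n - i) + F i * G (Suc (n - i))))
       = (\<Sum>i = 0..Suc n. of_nat (Suc n choose i) * F i * G (Suc n - i))"
proof -
  have "(\<Sum>i = 0..Suc n. of_nat (Suc n choose i) * F i * G (Suc n - i))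
      = F 0 * G (Suc n) + (\<Sum>i = 0..n. of_nat (Suc n choose Suc i) * F (Suc i) * G (n - i))"
    by (subst sum.atLeast0_atMost_Suc_shift) simp
  also have "(\<Sum>i = 0..n. of_nat (Suc n choose Suc i) * F (Suc i) * G (n - i))
      = (\<Sum>i = 0..n. of_nat (n choose i) * F (Suc i) * G (n - i)) + (\<Sum>i = 0..n. of_nat (n choose Suc i) * F (Suc i) * G (n - i))"
    by (simp add: sum.distrib algebra_simps)
  also have "(\<Sum>i = 0..n. of_nat (n choose Suc i) * F (Suc i) * G (n - i))
      = (\<Sum>i = 0..n. of_nat (n choose i) * F i * G (Suc (n - i))) - F 0 * G (Suc n)"
  proof -
    have "(\<Sum>i = 0..n. of_nat (n choose i) * F i * G (Suc (n - i)))
        = (\<Sum>i = 0..Suc n. of_nat (n choose i) * F i * G (Suc n - i))"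
      by (simp add: Suc_diff_le)
    also have "\<dots> = F 0 * G (Suc n) + (\<Sum>i = 0..n. of_nat (n choose Suc i) * F (Suc i) * G (n - i))"
      by (subst sum.atLeast0_atMost_Suc_shift) simp
    finally show ?thesis by simp
  qed
  finally show ?thesis by (simp add: sum.distrib algebra_simps)
qed

lemma dchain_mult:
  assumes F: "dchain S F" and G: "dchain S G"
  shows "dchain S (\<lambda>n z. \<Sum>i = 0..n. of_nat (n choose i) * F i z * G (n - i) z)"
  unfolding dchain_def
proof (intro allI ballI)
  fix n z assume z: "z \<in> S"
  have dF: "(F i has_field_derivative F (Suc i) z) (at z)" for i using F z by (auto simp: dchain_def)
  have dG: "(G i has_field_derivative G (Suc i) z) (at z)" for i using G z by (auto simp: dchain_def)
  have "((\<lambda>z. \<Sum>i = 0..n. of_nat (n choose i) * F i z * G (n - i) z) has_field_derivative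
        (\<Sum>i = 0..n. of_nat (n choose i) * (F (Suc i) z * G (n - i) z + F i z * G (Suc (n - i)) z))) (at z)"
    by (intro DERIV_sum) (auto intro!: derivative_eq_intros dF dG simp: algebra_simps)
  thus "((\<lambda>z. \<Sum>i = 0..n. of_nat (n choose i) * F i z * G (n - i) z) has_field_derivative
        (\<Sum>i = 0..Suc n. of_nat (Suc n choose i) * F i z * G (Suc n - i) z)) (at z)"
    using leibniz_sum[of n "\<lambda>i. F i z" "\<lambda>i. G i z"] by simp
qed

lemma dchain_sum:
  assumes "\<And>j. j \<in> A \<Longrightarrow> dchain S (F j)"
  shows "dchain S (\<lambda>n z. \<Sum>j\<in>A. c j * F j n z)"
  unfolding dchain_def
proof (intro allI ballI)
  fix n z assume z: "z \<in> S"
  show "((\<lambda>z. \<Sum>j\<in>A. c j * F j n z) has_field_derivative (\<Sum>j\<in>A. c j * F j (Suc n) z)) (at z)"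
    by (intro DERIV_sum DERIV_cmult) (use assms z in \<open>auto simp: dchain_def\<close>)
qed




definition Gf :: "nat \<Rightarrow> nat \<Rightarrow> complex \<Rightarrow> complex \<Rightarrow> complex" where
  "Gf p q a b = (if q = 0 then Polygamma p a - Polygamma p (a + b) else - Polygamma (p + q) (a + b))"

lemma HP_add: "a \<in> HP \<Longrightarrow> b \<in> HP \<Longrightarrow> a + b \<in> HP" by (simp add: HP_def)

lemma Gf_chain_b: assumes a: "a \<in> HP" shows "dchain HP (\<lambda>q b. Gf p q a b)"
  unfolding dchain_def
proof (intro allI ballI)
  fix q b assume b: "b \<in> HP"
  have ab: "a + b \<notin> \<int>\<^sub>\<le>\<^sub>0" using HP_add[OF a b] HP_nonpos by blast
  show "((\<lambda>b. Gf p q a b) has_field_derivative Gf p (Suc q) a b) (at b)"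
  proof (cases "q = 0")
    case True
    show ?thesis unfolding Gf_def using True ab
      by (auto intro!: derivative_eq_intros)
  next
    case False
    show ?thesis unfolding Gf_def using False ab
      by (auto intro!: derivative_eq_intros)
  qed
qed

lemma Gf_chain_a: assumes b: "b \<in> HP" shows "dchain HP (\<lambda>p a. Gf p q a b)"
  unfolding dchain_def
proof (intro allI ballI)
  fix p a assume a: "a \<in> HP"
  have ab: "a + b \<notin> \<int>\<^sub>\<le>\<^sub>0" using HP_add[OF a b] HP_nonpos by blast
  have a': "a \<notin> \<int>\<^sub>\<le>\<^sub>0" using a HP_nonpos by blast
  show "((\<lambda>a. Gf p q a b) has_field_derivative Gf (Suc p) q a b) (at a)"
  proof (cases "q = 0")
    case True
    show ?thesis unfolding Gf_def using True ab a'
      by (auto intro!: derivative_eq_intros)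
  next
    case False
    show ?thesis unfolding Gf_def using False ab
      by (auto intro!: derivative_eq_intros)
  qed
qed

lemma TI_chain_b: assumes a: "a \<in> HP" shows "dchain HP (\<lambda>k b. TI a b m k)"
  unfolding dchain_def using TI_deriv2 a by (auto simp: HP_def)

lemma TI_chain_a: assumes b: "b \<in> HP" shows "dchain HP (\<lambda>m a. TI a b m k)"
  unfolding dchain_def using TI_deriv1 b by (auto simp: HP_def)

lemma TI_chain_a1: assumes b: "b \<in> HP" shows "dchain HP (\<lambda>n a. TI a b (Suc n) k)"
  unfolding dchain_def using TI_deriv1 b by (auto simp: HP_def)

lemma b_identity: assumes a: "a \<in> HP" and b: "b \<in> HP"
  shows "TI a b (Suc 0) k = (\<Sum>j = 0..k. of_nat (k choose j) * TI a b 0 j * Gf 0 (k - j) a b)"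
proof -
  have "(\<lambda>k b. TI a b (Suc 0) k) k b = (\<lambda>n z. \<Sum>j = 0..n. of_nat (n choose j) * TI a z 0 j * Gf 0 (n - j) a z) k b"
  proof (rule dchain_unique[OF HP_open TI_chain_b[OF a] dchain_mult[OF TI_chain_b[OF a] Gf_chain_b[OF a]]])
    fix z assume z: "z \<in> HP"
    show "TI a z (Suc 0) 0 = (\<Sum>j = 0..0. of_nat (0 choose j) * TI a z 0 j * Gf 0 (0 - j) a z)"
      using TI_key[of a z] a z by (simp add: HP_def Gf_def)
  qed (rule b)
  thus ?thesis by simp
qed

lemma a_identity: assumes a: "a \<in> HP"
  shows "TI a 1 (Suc n) k = (\<Sum>j = 0..k. of_nat (k choose j) *
            (\<Sum>i = 0..n. of_nat (n choose i) * TI a 1 i j * Gf (n - i) (k - j) a 1))"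
proof -
  have one: "(1::complex) \<in> HP" by (simp add: HP_def)
  have "(\<lambda>n a. TI a 1 (Suc n) k) n a = (\<lambda>n z. \<Sum>j = 0..k. of_nat (k choose j) *
            (\<Sum>i = 0..n. of_nat (n choose i) * TI z 1 i j * Gf (n - i) (k - j) z 1)) n a"
  proof (rule dchain_unique[OF HP_open TI_chain_a1[OF one]])
    show "dchain HP (\<lambda>n z. \<Sum>j = 0..k. of_nat (k choose j) *
            (\<Sum>i = 0..n. of_nat (n choose i) * TI z 1 i j * Gf (n - i) (k - j) z 1))"
      by (intro dchain_sum dchain_mult TI_chain_a Gf_chain_a one)
    fix z assume z: "z \<in> HP"
    show "TI z 1 (Suc 0) k = (\<Sum>j = 0..k. of_nat (k choose j) *
            (\<Sum>i = 0..0. of_nat (0 choose i) * TI z 1 i j * Gf (0 - i) (k - j) z 1))"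
      using b_identity[OF z one, of k] by (simp add: mult.assoc)
  qed (rule a)
  thus ?thesis by simp
qed

lemma Beta_1: assumes "a \<in> HP" shows "Beta a 1 = 1 / a"
proof -
  have n: "a \<notin> \<int>\<^sub>\<le>\<^sub>0" using assms HP_nonpos by blast
  hence "Gamma a \<noteq> 0" by (simp add: Gamma_eq_zero_iff)
  moreover have "a \<noteq> 0" using assms by (auto simp: HP_def)
  ultimately show ?thesis using Gamma_plus1[OF n] by (simp add: Beta_def)
qed

lemma i0_identity: assumes a: "a \<in> HP"
  shows "TI a 1 n 0 = (-1) ^ n * fact n / a ^ (Suc n)"
proof -
  have one: "(1::complex) \<in> HP" by (simp add: HP_def)
  have "(\<lambda>n a. TI a 1 n 0) n a = (\<lambda>n z. (-1) ^ n * fact n / z ^ (Suc n)) n a"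
  proof (rule dchain_unique[OF HP_open TI_chain_a[OF one]])
    show "dchain HP (\<lambda>n z. (-1) ^ n * fact n / z ^ (Suc n))"
      unfolding dchain_def
    proof (intro allI ballI)
      fix n and z :: complex assume z: "z \<in> HP"
      hence z0: "z \<noteq> 0" by (auto simp: HP_def)
      have d: "((\<lambda>z. z ^ Suc n) has_field_derivative of_nat (Suc n) * z ^ n) (at z)"
        using DERIV_power_Suc[OF DERIV_ident, where n=n and x=z and s=UNIV] by (simp add: algebra_simps)
      have d1: "((\<lambda>z. (-1) ^ n * fact n * inverse (z ^ Suc n)) has_field_derivative
             (-1) ^ n * fact n * (- (of_nat (Suc n) * z ^ n * inverse ((z ^ Suc n) ^ Suc (Suc 0))))) (at z)"
        by (intro DERIV_cmult DERIV_inverse_fun d) (use z0 in simp)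
      moreover have e2: "(-1) ^ n * fact n * (- (of_nat (Suc n) * z ^ n * inverse ((z ^ Suc n) ^ Suc (Suc 0))))
          = ((-1) ^ Suc n * fact (Suc n) / z ^ (Suc (Suc n)) :: complex)"
      proof -
        have "(z ^ Suc n) ^ Suc (Suc 0) = z ^ n * z ^ Suc (Suc n)" by (simp add: power_Suc power_mult_distrib mult_ac)
        thus ?thesis using z0 by (simp add: field_simps)
      qed
      have eqf: "(\<lambda>z::complex. (-1) ^ n * fact n / z ^ (Suc n)) = (\<lambda>z. (-1) ^ n * fact n * inverse (z ^ Suc n))"
        by (simp add: divide_inverse)
      show "((\<lambda>z. (-1) ^ n * fact n / z ^ (Suc n)) has_field_derivative (-1) ^ Suc n * fact (Suc n) / z ^ (Suc (Suc n))) (at z)"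
        by (subst eqf) (rule DERIV_cong[OF d1 e2])
    qed
    fix z assume z: "z \<in> HP"
    show "TI z 1 0 0 = (-1) ^ 0 * fact 0 / z ^ (Suc 0)"
      using TI_Beta[of z 1] Beta_1[OF z] z by (simp add: HP_def)
  qed (rule a)
  thus ?thesis by simp
qed




lemma Iint_TI: assumes "Re \<alpha> > 0" shows "Iint \<alpha> m k = TI \<alpha> 1 m k"
proof -
  have "Iint \<alpha> m k = integral {0<..<1}
     (\<lambda>x::real. complex_of_real x powr (\<alpha> - 1) * complex_of_real ((ln x) ^ m * (ln (1 - x)) ^ k))"
    by (simp add: Iint_def integral_open_interval_real)
  also have "\<dots> = integral {0<..<1} (fI \<alpha> 1 m k)"
    by (rule integral_cong) (auto simp: fI_def powr_def Ln_of_real mult_ac)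
  finally show ?thesis by (simp add: TI_def)
qed

lemma PG: assumes "Re \<alpha> > 0" "s \<ge> 2"
  shows "- Polygamma (s - 1) (\<alpha> + 1) = (-1)^s * fact (s - 1) * (shifted_harmonic \<alpha> s - zeta_int s)"
proof -
  have a1: "\<alpha> + 1 \<noteq> 0" using assms(1) by (auto simp: complex_eq_iff)
  have S1: "summable (\<lambda>k. inverse ((\<alpha> + 1 + of_nat k)^s))" by (rule Polygamma_converges'[OF a1 assms(2)])
  have S2: "summable (\<lambda>k. inverse ((1 + of_nat k)^s :: complex))" by (rule Polygamma_converges'[OF _ assms(2)]) simp
  have e1: "(\<lambda>n. 1 / (of_nat (Suc n))^s) = (\<lambda>k. inverse ((1 + of_nat k)^s :: complex))"
    by (simp add: divide_inverse)
  have e2: "(\<lambda>n. 1 / (of_nat (Suc n) + \<alpha>)^s) = (\<lambda>k. inverse ((\<alpha> + 1 + of_nat k)^s))"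
    by (simp add: divide_inverse add_ac)
  have "shifted_harmonic \<alpha> s = (\<Sum>k. inverse ((1 + of_nat k)^s :: complex)) - (\<Sum>k. inverse ((\<alpha> + 1 + of_nat k)^s))"
    unfolding shifted_harmonic_def using suminf_diff[OF S2 S1] e1 e2 by (simp add: divide_inverse add_ac)
  moreover have "zeta_int s = (\<Sum>k. inverse ((1 + of_nat k)^s :: complex))"
    unfolding zeta_int_def using e1 by simp
  ultimately have sh: "shifted_harmonic \<alpha> s - zeta_int s = - (\<Sum>k. inverse ((\<alpha> + 1 + of_nat k)^s))"
    by simp
  have s1: "Suc (s - 1) = s" using assms(2) by simp
  have "Polygamma (s - 1) (\<alpha> + 1) = (-1)^s * fact (s - 1) * (\<Sum>k. inverse ((\<alpha> + 1 + of_nat k)^s))"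
    using assms(2) s1 by (simp add: Polygamma_def)
  thus ?thesis using sh by simp
qed

lemma term1: assumes "Re \<alpha> > 0" "i \<le> n"
  shows "of_nat (n choose i) * TI \<alpha> 1 i k * Gf (n - i) 0 \<alpha> 1
       = of_nat ((Suc n - 1) choose i) * of_nat (fact (Suc n - i - 1))
               * (-1) ^ (Suc n - i) / \<alpha> ^ (Suc n - i) * Iint \<alpha> i k"
proof -
  have a0: "\<alpha> \<noteq> 0" using assms(1) by auto
  have g: "Gf (n - i) 0 \<alpha> 1 = - ((-1) ^ (n - i) * fact (n - i) / \<alpha> ^ Suc (n - i))"
    using Polygamma_plus1[OF a0, of "n - i"] by (simp add: Gf_def)
  have s: "Suc n - i = Suc (n - i)" using assms(2) by simp
  show ?thesis unfolding g s using Iint_TI[OF assms(1), of i k] by simp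
qed

lemma term2: assumes "Re \<alpha> > 0" "i \<le> n" "j < k"
  shows "of_nat (k choose j) * (of_nat (n choose i) * TI \<alpha> 1 i j * Gf (n - i) (k - j) \<alpha> 1)
     = of_nat ((Suc n - 1) choose i) * of_nat (k choose j)
               * (-1) ^ (Suc n + k - i - j) * of_nat (fact (Suc n + k - i - j - 1))
               * (shifted_harmonic \<alpha> (Suc n + k - i - j) - zeta_int (Suc n + k - i - j))
               * Iint \<alpha> i j"
proof -
  define s where "s = Suc n + k - i - j"
  have s2: "s \<ge> 2" and s1: "s - 1 = n - i + (k - j)" using assms by (auto simp: s_def)
  have g: "Gf (n - i) (k - j) \<alpha> 1 = - Polygamma (s - 1) (\<alpha> + 1)"
    using assms(3) s1 by (simp add: Gf_def)
  show ?thesis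
    unfolding s_def[symmetric] g PG[OF assms(1) s2] using Iint_TI[OF assms(1), of i j] by simp
qed

lemma main_Suc: assumes "Re \<alpha> > 0" "k \<ge> 1"
  shows "Iint \<alpha> (Suc n) k =
      (\<Sum>i<Suc n. of_nat ((Suc n - 1) choose i) * of_nat (fact (Suc n - i - 1))
               * (-1) ^ (Suc n - i) / \<alpha> ^ (Suc n - i) * Iint \<alpha> i k)
    + (\<Sum>i<Suc n. \<Sum>j<k. of_nat ((Suc n - 1) choose i) * of_nat (k choose j)
               * (-1) ^ (Suc n + k - i - j) * of_nat (fact (Suc n + k - i - j - 1))
               * (shifted_harmonic \<alpha> (Suc n + k - i - j) - zeta_int (Suc n + k - i - j))
               * Iint \<alpha> i j)"
proof -
  have a: "\<alpha> \<in> HP" using assms(1) by (simp add: HP_def)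
  define X where "X j = of_nat (k choose j) * (\<Sum>i = 0..n. of_nat (n choose i) * TI \<alpha> 1 i j * Gf (n - i) (k - j) \<alpha> 1)" for j
  have "Iint \<alpha> (Suc n) k = (\<Sum>j = 0..k. X j)"
    using a_identity[OF a, of n k] Iint_TI[OF assms(1)] by (simp add: X_def)
  also have "\<dots> = X k + (\<Sum>j<k. X j)"
    by (simp add: atLeast0AtMost lessThan_Suc_atMost[symmetric])
  also have "X k = (\<Sum>i<Suc n. of_nat ((Suc n - 1) choose i) * of_nat (fact (Suc n - i - 1))
               * (-1) ^ (Suc n - i) / \<alpha> ^ (Suc n - i) * Iint \<alpha> i k)"
  proof -
    have "X k = (\<Sum>i=0..n. of_nat (n choose i) * TI \<alpha> 1 i k * Gf (n - i) 0 \<alpha> 1)" by (simp add: X_def)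
    also have "\<dots> = (\<Sum>i=0..n. of_nat ((Suc n - 1) choose i) * of_nat (fact (Suc n - i - 1))
               * (-1) ^ (Suc n - i) / \<alpha> ^ (Suc n - i) * Iint \<alpha> i k)"
      by (intro sum.cong refl term1[OF assms(1)]) auto
    finally show ?thesis by (simp add: atLeast0AtMost lessThan_Suc_atMost)
  qed
  also have "(\<Sum>j<k. X j) = (\<Sum>j<k. \<Sum>i<Suc n. of_nat (k choose j) * (of_nat (n choose i) * TI \<alpha> 1 i j * Gf (n - i) (k - j) \<alpha> 1))"
    unfolding X_def by (simp add: sum_distrib_left atLeast0AtMost lessThan_Suc_atMost)
  also have "\<dots> = (\<Sum>i<Suc n. \<Sum>j<k. of_nat (k choose j) * (of_nat (n choose i) * TI \<alpha> 1 i j * Gf (n - i) (k - j) \<alpha> 1))"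
    by (rule sum.swap)
  also have "\<dots> = (\<Sum>i<Suc n. \<Sum>j<k. of_nat ((Suc n - 1) choose i) * of_nat (k choose j)
               * (-1) ^ (Suc n + k - i - j) * of_nat (fact (Suc n + k - i - j - 1))
               * (shifted_harmonic \<alpha> (Suc n + k - i - j) - zeta_int (Suc n + k - i - j))
               * Iint \<alpha> i j)"
    by (intro sum.cong refl term2[OF assms(1)]) auto
  finally show ?thesis .
qed

theorem theorem2p1:
  fixes \<alpha> :: complex and m k :: nat
  assumes "Re \<alpha> > 0" and "m \<ge> 1" and "k \<ge> 1"
  shows "Iint \<alpha> m k =
      (\<Sum>i<m. of_nat ((m - 1) choose i) * of_nat (fact (m - i - 1))
               * (-1) ^ (m - i) / \<alpha> ^ (m - i) * Iint \<alpha> i k)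
    + (\<Sum>i<m. \<Sum>j<k. of_nat ((m - 1) choose i) * of_nat (k choose j)
               * (-1) ^ (m + k - i - j) * of_nat (fact (m + k - i - j - 1))
               * (shifted_harmonic \<alpha> (m + k - i - j) - zeta_int (m + k - i - j))
               * Iint \<alpha> i j)
    \<and> Iint \<alpha> 0 0 = 1 / \<alpha>
    \<and> (\<forall>i. Iint \<alpha> i 0 = (-1) ^ i * of_nat (fact i) / \<alpha> ^ (i + 1))"
proof (intro conjI allI)
  have a: "\<alpha> \<in> HP" using assms(1) by (simp add: HP_def)
  obtain n where mn: "m = Suc n" using assms(2) by (cases m) auto
  show "Iint \<alpha> m k =
      (\<Sum>i<m. of_nat ((m - 1) choose i) * of_nat (fact (m - i - 1))
               * (-1) ^ (m - i) / \<alpha> ^ (m - i) * Iint \<alpha> i k)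
    + (\<Sum>i<m. \<Sum>j<k. of_nat ((m - 1) choose i) * of_nat (k choose j)
               * (-1) ^ (m + k - i - j) * of_nat (fact (m + k - i - j - 1))
               * (shifted_harmonic \<alpha> (m + k - i - j) - zeta_int (m + k - i - j))
               * Iint \<alpha> i j)"
    unfolding mn by (rule main_Suc[OF assms(1,3)])
  show "Iint \<alpha> 0 0 = 1 / \<alpha>"
    using i0_identity[OF a, of 0] Iint_TI[OF assms(1)] by simp
  fix i show "Iint \<alpha> i 0 = (-1) ^ i * of_nat (fact i) / \<alpha> ^ (i + 1)"
    using i0_identity[OF a, of i] Iint_TI[OF assms(1)] by simp
qed


end
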